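(* Let $G$ be a digraph and $n\ge 1$. If $G$ is congruence $n$-permutable then $G^{\bot\top}$ is congruence $(n+2)$-permutable. If $G$ is nondismantlable and $G^{\bot\top}$ is congruence $(n+2)$-permutable, then $G$ is congruence $n$-permutable.
   Context: Digraphs are finite and loopless. For $G=(V,E)$: $G^\bot$ is the digraph on $V\cup\{\bot\}$ with edges $E\cup\{(\bot,v):v\in V\}$; $G^\top$ is the digraph on $V\cup\{\top\}$ with edges $E\cup\{(v,\top):v\in V\}$; $G^{\bot\top}=(G^\bot)^\top$. For a vertex $x$, $x^+=\{v:(x,v)\in E\}$ and $x^-=\{v:(v,x)\in E\}$. $G$ is nondismantlable if for all $v,w\in V$, $v^+\subseteq w^+$ and $v^-\subseteq w^-$ imply $v=w$. A polymorphism is a map $f:V^k\to V$ with $(f(a_1,\dots,a_k),f(b_1,\dots,b_k))\in E$ whenever all $(a_i,b_i)\in E$. A digraph is congruence $n$-permutable if it has ternary polymorphisms $p_0,\dots,p_n$ with $p_0(x,y,z)=x$, $p_i(x,x,y)=p_{i+1}(x,y,y)$ for $0\le i<n$, and $p_n(x,y,z)=z$, for all vertices $x,y,z$; congruence $1$-permutable means the equation $x=y$ holds, i.e. the digraph has one vertex. *)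

theory Defs
  imports Main
begin

type_synonym 'a digraph = "'a set \<times> ('a \<times> 'a) set"

definition is_digraph :: "'a digraph \<Rightarrow> bool" where
  "is_digraph G \<longleftrightarrow> finite (fst G) \<and> snd G \<subseteq> fst G \<times> fst G
     \<and> (\<forall>v. (v, v) \<notin> snd G)"

definition add_bot :: "'a digraph \<Rightarrow> 'a option digraph" where
  "add_bot G = (insert None (Some ` fst G),
     {(Some a, Some b) | a b. (a, b) \<in> snd G} \<union> {(None, Some v) | v. v \<in> fst G})"

definition add_top :: "'a digraph \<Rightarrow> 'a option digraph" where
  "add_top G = (insert None (Some ` fst G),
     {(Some a, Some b) | a b. (a, b) \<in> snd G} \<union> {(Some v, None) | v. v \<in> fst G})"

definition add_bot_top :: "'a digraph \<Rightarrow> 'a option option digraph" where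
  "add_bot_top G = add_top (add_bot G)"

definition out_nbrs :: "'a digraph \<Rightarrow> 'a \<Rightarrow> 'a set" where
  "out_nbrs G x = {v. (x, v) \<in> snd G}"

definition in_nbrs :: "'a digraph \<Rightarrow> 'a \<Rightarrow> 'a set" where
  "in_nbrs G x = {v. (v, x) \<in> snd G}"

definition nondismantlable :: "'a digraph \<Rightarrow> bool" where
  "nondismantlable G \<longleftrightarrow> (\<forall>v\<in>fst G. \<forall>w\<in>fst G.
     out_nbrs G v \<subseteq> out_nbrs G w \<and> in_nbrs G v \<subseteq> in_nbrs G w \<longrightarrow> v = w)"

definition ternary_polymorphism :: "'a digraph \<Rightarrow> ('a \<Rightarrow> 'a \<Rightarrow> 'a \<Rightarrow> 'a) \<Rightarrow> bool" where
  "ternary_polymorphism G f \<longleftrightarrow>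
     (\<forall>x\<in>fst G. \<forall>y\<in>fst G. \<forall>z\<in>fst G. f x y z \<in> fst G) \<and>
     (\<forall>a1 a2 a3 b1 b2 b3. (a1, b1) \<in> snd G \<and> (a2, b2) \<in> snd G \<and> (a3, b3) \<in> snd G
        \<longrightarrow> (f a1 a2 a3, f b1 b2 b3) \<in> snd G)"

definition cong_n_permutable :: "'a digraph \<Rightarrow> nat \<Rightarrow> bool" where
  "cong_n_permutable G n \<longleftrightarrow> (\<exists>p :: nat \<Rightarrow> 'a \<Rightarrow> 'a \<Rightarrow> 'a \<Rightarrow> 'a.
     (\<forall>i\<le>n. ternary_polymorphism G (p i)) \<and>
     (\<forall>x\<in>fst G. \<forall>y\<in>fst G. \<forall>z\<in>fst G.
        p 0 x y z = x \<and> p n x y z = z \<and>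
        (\<forall>i<n. p i x x y = p (Suc i) x y y)))"

end

theory Submission
  imports Defs
begin


lemma edge_bt: "(x,y) \<in> snd (add_bot_top G) \<longleftrightarrow>
  (\<exists>a b. x = Some (Some a) \<and> y = Some (Some b) \<and> (a,b) \<in> snd G) \<or>
  (\<exists>v\<in>fst G. x = Some None \<and> y = Some (Some v)) \<or>
  (\<exists>v\<in>fst G. x = Some (Some v) \<and> y = None) \<or> (x = Some None \<and> y = None)"
  by (auto simp: add_bot_top_def add_top_def add_bot_def)

lemma vert_bt: "x \<in> fst (add_bot_top G) \<longleftrightarrow> x = None \<or> x = Some None \<or> (\<exists>v\<in>fst G. x = Some (Some v))"
  by (auto simp: add_bot_top_def add_top_def add_bot_def)

lemma edgeE:
  assumes "is_digraph G" "(x,y) \<in> snd (add_bot_top G)"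
  obtains a b where "a \<in> fst G" "b \<in> fst G" "x = Some (Some a)" "y = Some (Some b)" "(a,b) \<in> snd G"
  | v where "v \<in> fst G" "x = Some None" "y = Some (Some v)"
  | v where "v \<in> fst G" "x = Some (Some v)" "y = None"
  | "x = Some None" "y = None"
  using assms unfolding edge_bt is_digraph_def by blast

lemma vertE:
  assumes "x \<in> fst (add_bot_top G)"
  obtains "x = None" | "x = Some None" | v where "v \<in> fst G" "x = Some (Some v)"
  using assms unfolding vert_bt by blast

definition inV :: "'a set \<Rightarrow> 'a option option \<Rightarrow> bool" where
  "inV V x \<longleftrightarrow> (\<exists>v\<in>V. x = Some (Some v))"

lemma inV_simps[simp]: "\<not> inV V None" "\<not> inV V (Some None)" "inV V (Some (Some v)) \<longleftrightarrow> v \<in> V"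
  by (auto simp: inV_def)

lemma edge_intros:
  "(a,b) \<in> snd G \<Longrightarrow> (Some (Some a), Some (Some b)) \<in> snd (add_bot_top G)"
  "v \<in> fst G \<Longrightarrow> (Some None, Some (Some v)) \<in> snd (add_bot_top G)"
  "v \<in> fst G \<Longrightarrow> (Some (Some v), None) \<in> snd (add_bot_top G)"
  "(Some None, None) \<in> snd (add_bot_top G)"
  by (auto simp: edge_bt)

definition extq :: "'a set \<Rightarrow> nat \<Rightarrow> (nat \<Rightarrow> 'a \<Rightarrow> 'a \<Rightarrow> 'a \<Rightarrow> 'a) \<Rightarrow> nat
   \<Rightarrow> 'a option option \<Rightarrow> 'a option option \<Rightarrow> 'a option option \<Rightarrow> 'a option option" where
  "extq V n p i x y z = (if i = 0 then x else if i = n+2 then z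
     else if inV V x \<and> inV V y \<and> inV V z then Some (Some (p (i-1) (the (the x)) (the (the y)) (the (the z))))
     else if i = 1 \<and> y = z \<and> \<not> inV V y then x
     else if i = n+1 \<and> x = y \<and> \<not> inV V x then z
     else if Some None \<in> {x,y,z} then Some None else None)"

lemma dir1:
  assumes dg: "is_digraph G" and n: "n \<ge> 1" and c: "cong_n_permutable G n"
  shows "cong_n_permutable (add_bot_top G) (n + 2)"
proof -
  obtain p where pp: "\<forall>i\<le>n. ternary_polymorphism G (p i)" and
    pid: "\<forall>x\<in>fst G. \<forall>y\<in>fst G. \<forall>z\<in>fst G.
        p 0 x y z = x \<and> p n x y z = z \<and> (\<forall>i<n. p i x x y = p (Suc i) x y y)"
    using c unfolding cong_n_permutable_def by blast
  let ?V = "fst G"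
  let ?q = "extq ?V n p"
  have poly: "ternary_polymorphism (add_bot_top G) (?q i)" if "i \<le> n+2" for i
  proof -
    have cl: "\<forall>x\<in>fst (add_bot_top G). \<forall>y\<in>fst (add_bot_top G). \<forall>z\<in>fst (add_bot_top G).
       ?q i x y z \<in> fst (add_bot_top G)"
    proof (intro ballI)
      fix x y z assume xyz: "x \<in> fst (add_bot_top G)" "y \<in> fst (add_bot_top G)" "z \<in> fst (add_bot_top G)"
      have "?q i x y z \<in> {x,z,Some None,None} \<or> (inV ?V x \<and> inV ?V y \<and> inV ?V z \<and> i \<noteq> 0 \<and> i \<noteq> n+2
         \<and> ?q i x y z = Some (Some (p (i-1) (the (the x)) (the (the y)) (the (the z)))))"
        unfolding extq_def by simp
      then show "?q i x y z \<in> fst (add_bot_top G)"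
      proof
        assume "?q i x y z \<in> {x,z,Some None,None}"
        then show ?thesis using xyz by (auto simp: vert_bt)
      next
        assume h: "inV ?V x \<and> inV ?V y \<and> inV ?V z \<and> i \<noteq> 0 \<and> i \<noteq> n+2
         \<and> ?q i x y z = Some (Some (p (i-1) (the (the x)) (the (the y)) (the (the z))))"
        then obtain a b c where abc: "a \<in> ?V" "b \<in> ?V" "c \<in> ?V" "x = Some (Some a)" "y = Some (Some b)" "z = Some (Some c)"
          unfolding inV_def by auto
        have "p (i-1) a b c \<in> ?V" using pp abc that h unfolding ternary_polymorphism_def by auto
        then show ?thesis using h abc by (simp add: vert_bt)
      qed
    qed
    have ed: "(?q i a1 a2 a3, ?q i b1 b2 b3) \<in> snd (add_bot_top G)"
      if e: "(a1, b1) \<in> snd (add_bot_top G)" "(a2, b2) \<in> snd (add_bot_top G)" "(a3, b3) \<in> snd (add_bot_top G)"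
      for a1 a2 a3 b1 b2 b3
    proof (cases "i = 0 \<or> i = n+2")
      case True then show ?thesis using e by (elim disjE) (simp_all add: extq_def)
    next
      case False
      hence i1: "1 \<le> i" "i \<le> n+1" "i - 1 \<le> n" using `i \<le> n+2` by auto
      have ppi: "ternary_polymorphism G (p (i-1))" using pp i1 by auto
      have p0: "p (i-1) x y z = x" if "i = 1" "x\<in>?V" "y\<in>?V" "z\<in>?V" for x y z using pid that by simp
      have pn: "p (i-1) x y z = z" if "i = n+1" "x\<in>?V" "y\<in>?V" "z\<in>?V" for x y z using pid that by simp
      have pe: "(p (i-1) a1 a2 a3, p (i-1) b1 b2 b3) \<in> snd G" if "(a1,b1) \<in> snd G" "(a2,b2) \<in> snd G" "(a3,b3) \<in> snd G" for a1 a2 a3 b1 b2 b3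
        using ppi that unfolding ternary_polymorphism_def by blast
      have pc: "p (i-1) a1 a2 a3 \<in> ?V" if "a1 \<in> ?V" "a2 \<in> ?V" "a3 \<in> ?V" for a1 a2 a3
        using ppi that unfolding ternary_polymorphism_def by blast
      consider "i = 1" | "i = n+1" | "i \<noteq> 1" "i \<noteq> n+1" by blast
      then show ?thesis
      proof cases
        case 1
        then have "i \<noteq> n+1" "i \<noteq> 0" "i \<noteq> n+2" and n0: "n \<noteq> 0" using n by auto
        have pe: "(p 0 a1 a2 a3, p 0 b1 b2 b3) \<in> snd G" if "(a1,b1) \<in> snd G" "(a2,b2) \<in> snd G" "(a3,b3) \<in> snd G" for a1 a2 a3 b1 b2 b3
          using pe[OF that] 1 by simp
        have pc: "p 0 a1 a2 a3 \<in> ?V" if "a1 \<in> ?V" "a2 \<in> ?V" "a3 \<in> ?V" for a1 a2 a3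
          using pc[OF that] 1 by simp
        have p0: "p 0 x y z = x" if "x\<in>?V" "y\<in>?V" "z\<in>?V" for x y z using p0[OF 1 that] 1 by simp
        with 1 show ?thesis
          apply (rule_tac edgeE[OF dg e(1)]; rule_tac edgeE[OF dg e(2)]; rule_tac edgeE[OF dg e(3)])
          apply (simp_all add: extq_def edge_intros pe pc p0 n0)
          done
      next
        case 2
        then have "i \<noteq> 1" "i \<noteq> 0" "i \<noteq> n+2" and n0: "n \<noteq> 0" using n by auto
        have pe: "(p n a1 a2 a3, p n b1 b2 b3) \<in> snd G" if "(a1,b1) \<in> snd G" "(a2,b2) \<in> snd G" "(a3,b3) \<in> snd G" for a1 a2 a3 b1 b2 b3
          using pe[OF that] 2 by simp
        have pc: "p n a1 a2 a3 \<in> ?V" if "a1 \<in> ?V" "a2 \<in> ?V" "a3 \<in> ?V" for a1 a2 a3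
          using pc[OF that] 2 by simp
        have pn: "p n x y z = z" if "x\<in>?V" "y\<in>?V" "z\<in>?V" for x y z using pn[OF 2 that] 2 by simp
        with 2 show ?thesis
          apply (rule_tac edgeE[OF dg e(1)]; rule_tac edgeE[OF dg e(2)]; rule_tac edgeE[OF dg e(3)])
          apply (simp_all add: extq_def edge_intros pe pc pn n0)
          done
      next
        case 3
        then have "i \<noteq> 0" "i \<noteq> n+2" using False by auto
        with 3 show ?thesis
          apply (rule_tac edgeE[OF dg e(1)]; rule_tac edgeE[OF dg e(2)]; rule_tac edgeE[OF dg e(3)])
          apply (simp_all add: extq_def edge_intros pe pc del: One_nat_def)
          done
      qed
    qed
    show ?thesis unfolding ternary_polymorphism_def using cl ed by blast
  qed
  have ids: "?q i x x y = ?q (Suc i) x y y" if hi: "i < n+2" and hx: "x \<in> fst (add_bot_top G)" and hy: "y \<in> fst (add_bot_top G)" for i x y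
  proof -
    have p0: "p 0 a b c = a" "p n a b c = c" if "a \<in> ?V" "b \<in> ?V" "c \<in> ?V" for a b c using pid that by blast+
    have ps: "p (i-1) a a b = p i a b b" if "1 \<le> i" "i \<le> n" "a \<in> ?V" "b \<in> ?V" for a b
    proof -
      have "i - 1 < n" "Suc (i-1) = i" using that by auto
      then show ?thesis using pid that by metis
    qed
    consider "i = 0" | "i = n+1" | "1 \<le> i" "i \<le> n" using hi by linarith
    then show ?thesis
    proof cases
      case 1
      then show ?thesis
        apply (rule_tac vertE[OF hx]; rule_tac vertE[OF hy])
        apply (simp_all add: extq_def p0 del: One_nat_def)
        done
    next
      case 2
      then show ?thesis
        apply (rule_tac vertE[OF hx]; rule_tac vertE[OF hy])
        apply (simp_all add: extq_def p0 del: One_nat_def)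
        done
    next
      case 3
      then show ?thesis
        apply (rule_tac vertE[OF hx]; rule_tac vertE[OF hy])
        apply (simp_all add: extq_def p0 ps del: One_nat_def)
        done
    qed
  qed
  show ?thesis unfolding cong_n_permutable_def
    apply (rule exI[of _ ?q])
    using poly ids by (auto simp: extq_def)
qed


lemma edge_SS: "(Some (Some a), Some (Some b)) \<in> snd (add_bot_top G) \<longleftrightarrow> (a,b) \<in> snd G"
  by (simp add: edge_bt)

lemma dir2:
  assumes dg: "is_digraph G" and nd: "nondismantlable G" and c: "cong_n_permutable (add_bot_top G) (n + 2)"
  shows "cong_n_permutable G n"
proof -
  let ?G = "add_bot_top G"
  let ?W = "fst ?G"
  let ?V = "fst G"
  obtain q where qp: "\<forall>i\<le>n+2. ternary_polymorphism ?G (q i)" and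
    qid: "\<forall>x\<in>?W. \<forall>y\<in>?W. \<forall>z\<in>?W.
        q 0 x y z = x \<and> q (n+2) x y z = z \<and> (\<forall>i<n+2. q i x x y = q (Suc i) x y y)"
    using c unfolding cong_n_permutable_def by blast
  have qe: "(q i a1 a2 a3, q i b1 b2 b3) \<in> snd ?G"
    if "i \<le> n+2" "(a1,b1) \<in> snd ?G" "(a2,b2) \<in> snd ?G" "(a3,b3) \<in> snd ?G" for i a1 a2 a3 b1 b2 b3
    using qp that unfolding ternary_polymorphism_def by blast
  have idem: "q i x x x = x" if "i \<le> n+2" "x \<in> ?W" for i x
    using that
  proof (induction i)
    case 0 then show ?case using qid by blast
  next
    case (Suc i)
    have h: "\<forall>i<n+2. q i x x x = q (Suc i) x x x" using qid Suc.prems(2) by blast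
    then have "q i x x x = q (Suc i) x x x" using Suc.prems(1) by simp
    then show ?case using Suc by simp
  qed
  have bot: "Some None \<in> ?W" and top: "None \<in> ?W" by (auto simp: vert_bt)
  have inV: "\<exists>w\<in>?V. q i (Some (Some a)) (Some (Some b)) (Some (Some c)) = Some (Some w)"
    if "i \<le> n+2" "a \<in> ?V" "b \<in> ?V" "c \<in> ?V" for i a b c
  proof -
    have e1: "(Some None, q i (Some (Some a)) (Some (Some b)) (Some (Some c))) \<in> snd ?G"
      using qe[OF that(1) edge_intros(2)[OF that(2)] edge_intros(2)[OF that(3)] edge_intros(2)[OF that(4)]]
        idem[OF that(1) bot] by simp
    have e2: "(q i (Some (Some a)) (Some (Some b)) (Some (Some c)), None) \<in> snd ?G"
      using qe[OF that(1) edge_intros(3)[OF that(2)] edge_intros(3)[OF that(3)] edge_intros(3)[OF that(4)]]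
        idem[OF that(1) top] by simp
    show ?thesis using e1 e2 unfolding edge_bt by auto
  qed
  define p where "p i x y z = the (the (q (Suc i) (Some (Some x)) (Some (Some y)) (Some (Some z))))" for i x y z
  have pS: "q (Suc i) (Some (Some x)) (Some (Some y)) (Some (Some z)) = Some (Some (p i x y z)) \<and> p i x y z \<in> ?V"
    if "i \<le> n" "x \<in> ?V" "y \<in> ?V" "z \<in> ?V" for i x y z
    using inV[of "Suc i" x y z] that unfolding p_def by auto
  have SSV: "Some (Some v) \<in> ?W" if "v \<in> ?V" for v using that by (auto simp: vert_bt)
  have Ein: "a \<in> ?V" "b \<in> ?V" if "(a,b) \<in> snd G" for a b using dg that unfolding is_digraph_def by auto
  have ndr: "v = w" if "v \<in> ?V" "w \<in> ?V" "out_nbrs G v \<subseteq> out_nbrs G w" "in_nbrs G v \<subseteq> in_nbrs G w" for v w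
    using nd that unfolding nondismantlable_def by blast
  have first: "p 0 x y z = x" if xyz: "x \<in> ?V" "y \<in> ?V" "z \<in> ?V" for x y z
  proof -
    let ?w = "p 0 x y z"
    have qw: "q 1 (Some (Some x)) (Some (Some y)) (Some (Some z)) = Some (Some ?w)" using pS[of 0 x y z] xyz by simp
    have q1: "q 1 u v v = u" if "u \<in> ?W" "v \<in> ?W" for u v
    proof -
      have h: "\<forall>i<n+2. q i u u v = q (Suc i) u v v" "q 0 u u v = u" using qid that by blast+
      have "q 0 u u v = q (Suc 0) u v v" using h(1) by simp
      then show ?thesis using h(2) by simp
    qed
    have "out_nbrs G x \<subseteq> out_nbrs G ?w"
    proof
      fix x' assume "x' \<in> out_nbrs G x"
      then have ex: "(x,x') \<in> snd G" by (simp add: out_nbrs_def)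
      have "(q 1 (Some (Some x)) (Some (Some y)) (Some (Some z)), q 1 (Some (Some x')) None None) \<in> snd ?G"
        using qe[of 1, OF _ edge_intros(1)[OF ex] edge_intros(3)[OF xyz(2)] edge_intros(3)[OF xyz(3)]] by simp
      then have "(Some (Some ?w), Some (Some x')) \<in> snd ?G" using qw q1[OF SSV[OF Ein(2)[OF ex]] top] by simp
      then show "x' \<in> out_nbrs G ?w" by (simp add: edge_SS out_nbrs_def)
    qed
    moreover have "in_nbrs G x \<subseteq> in_nbrs G ?w"
    proof
      fix x' assume "x' \<in> in_nbrs G x"
      then have ex: "(x',x) \<in> snd G" by (simp add: in_nbrs_def)
      have "(q 1 (Some (Some x')) (Some None) (Some None), q 1 (Some (Some x)) (Some (Some y)) (Some (Some z))) \<in> snd ?G"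
        using qe[of 1, OF _ edge_intros(1)[OF ex] edge_intros(2)[OF xyz(2)] edge_intros(2)[OF xyz(3)]] by simp
      then have "(Some (Some x'), Some (Some ?w)) \<in> snd ?G" using qw q1[OF SSV[OF Ein(1)[OF ex]] bot] by simp
      then show "x' \<in> in_nbrs G ?w" by (simp add: edge_SS in_nbrs_def)
    qed
    moreover have "?w \<in> ?V" using pS[of 0 x y z] xyz by simp
    ultimately have "x = ?w" using ndr xyz by blast
    then show ?thesis by simp
  qed
  have last: "p n x y z = z" if xyz: "x \<in> ?V" "y \<in> ?V" "z \<in> ?V" for x y z
  proof -
    let ?w = "p n x y z"
    have qw: "q (Suc n) (Some (Some x)) (Some (Some y)) (Some (Some z)) = Some (Some ?w)" using pS[of n x y z] xyz by simp
    have q1: "q (Suc n) u u v = v" if "u \<in> ?W" "v \<in> ?W" for u v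
    proof -
      have h: "\<forall>i<n+2. q i u u v = q (Suc i) u v v" "q (n+2) u v v = v" using qid that by blast+
      have "q (Suc n) u u v = q (Suc (Suc n)) u v v" using h(1) by simp
      also have "\<dots> = v" using h(2) by simp
      finally show ?thesis .
    qed
    have "out_nbrs G z \<subseteq> out_nbrs G ?w"
    proof
      fix x' assume "x' \<in> out_nbrs G z"
      then have ex: "(z,x') \<in> snd G" by (simp add: out_nbrs_def)
      have "(q (Suc n) (Some (Some x)) (Some (Some y)) (Some (Some z)), q (Suc n) None None (Some (Some x'))) \<in> snd ?G"
        using qe[of "Suc n", OF _ edge_intros(3)[OF xyz(1)] edge_intros(3)[OF xyz(2)] edge_intros(1)[OF ex]] by simp
      then have "(Some (Some ?w), Some (Some x')) \<in> snd ?G" using qw q1[OF top SSV[OF Ein(2)[OF ex]]] by simp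
      then show "x' \<in> out_nbrs G ?w" by (simp add: edge_SS out_nbrs_def)
    qed
    moreover have "in_nbrs G z \<subseteq> in_nbrs G ?w"
    proof
      fix x' assume "x' \<in> in_nbrs G z"
      then have ex: "(x',z) \<in> snd G" by (simp add: in_nbrs_def)
      have "(q (Suc n) (Some None) (Some None) (Some (Some x')), q (Suc n) (Some (Some x)) (Some (Some y)) (Some (Some z))) \<in> snd ?G"
        using qe[of "Suc n", OF _ edge_intros(2)[OF xyz(1)] edge_intros(2)[OF xyz(2)] edge_intros(1)[OF ex]] by simp
      then have "(Some (Some x'), Some (Some ?w)) \<in> snd ?G" using qw q1[OF bot SSV[OF Ein(1)[OF ex]]] by simp
      then show "x' \<in> in_nbrs G ?w" by (simp add: edge_SS in_nbrs_def)
    qed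
    moreover have "?w \<in> ?V" using pS[of n x y z] xyz by simp
    ultimately have "z = ?w" using ndr xyz by blast
    then show ?thesis by simp
  qed
  have mid: "p i x x y = p (Suc i) x y y" if "i < n" "x \<in> ?V" "y \<in> ?V" for i x y
  proof -
    have "Some (Some (p i x x y)) = q (Suc i) (Some (Some x)) (Some (Some x)) (Some (Some y))"
      using pS[of i x x y] that by simp
    also have "\<dots> = q (Suc (Suc i)) (Some (Some x)) (Some (Some y)) (Some (Some y))"
    proof -
      have h: "\<forall>i<n+2. q i (Some (Some x)) (Some (Some x)) (Some (Some y)) = q (Suc i) (Some (Some x)) (Some (Some y)) (Some (Some y))"
        using qid SSV[OF that(2)] SSV[OF that(3)] by blast
      then show ?thesis using that(1) by simp
    qed
    also have "\<dots> = Some (Some (p (Suc i) x y y))"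
      using pS[of "Suc i" x y y] that by simp
    finally show ?thesis by simp
  qed
  have poly: "ternary_polymorphism G (p i)" if "i \<le> n" for i
    unfolding ternary_polymorphism_def
  proof (intro conjI allI impI ballI)
    fix x y z assume "x \<in> ?V" "y \<in> ?V" "z \<in> ?V"
    then show "p i x y z \<in> ?V" using pS that by blast
  next
    fix a1 a2 a3 b1 b2 b3
    assume h: "(a1, b1) \<in> snd G \<and> (a2, b2) \<in> snd G \<and> (a3, b3) \<in> snd G"
    have "(q (Suc i) (Some (Some a1)) (Some (Some a2)) (Some (Some a3)), q (Suc i) (Some (Some b1)) (Some (Some b2)) (Some (Some b3))) \<in> snd ?G"
      using qe[of "Suc i", OF _ edge_intros(1) edge_intros(1) edge_intros(1)] h that by simp
    moreover have "a1 \<in> ?V" "a2 \<in> ?V" "a3 \<in> ?V" "b1 \<in> ?V" "b2 \<in> ?V" "b3 \<in> ?V" using h Ein by blast+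
    ultimately show "(p i a1 a2 a3, p i b1 b2 b3) \<in> snd G"
      using pS[of i a1 a2 a3] pS[of i b1 b2 b3] that by (simp add: edge_SS)
  qed
  show ?thesis unfolding cong_n_permutable_def
    using poly first last mid by blast
qed

theorem theorem5p3:
  fixes G :: "'a digraph" and n :: nat
  assumes "is_digraph G" and "n \<ge> 1"
  shows "(cong_n_permutable G n \<longrightarrow> cong_n_permutable (add_bot_top G) (n + 2))
    \<and> (nondismantlable G \<and> cong_n_permutable (add_bot_top G) (n + 2)
         \<longrightarrow> cong_n_permutable G n)"
  using dir1[OF assms] dir2[OF assms(1)] by blast

end
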